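(* Let $h>0$ and $n\ge1$. For $(\theta_1,\dots,\theta_n)\in U=\{(\theta_1,\dots,\theta_n)\in(0,1)^n:1>\theta_1>\theta_2>\cdots>\theta_n>0\}$ let $\Theta\in\mathbb{R}^{n\times n}$ be the matrix with entries $\Theta_{ii}=\frac{1}{4h}\cot(\pi\theta_i)$ and, for $i\neq j$, $\Theta_{ij}=\frac{1}{4h}\left(\cot\left(\pi\frac{\theta_i+\theta_j}{2}\right)-\cot\left(\pi\frac{\theta_i-\theta_j}{2}\right)\right)$. Then the set of $(\theta_1,\dots,\theta_n)\in U$ for which $\Theta$ is not invertible has Lebesgue measure zero. *)

theory Defs
  imports "HOL-Analysis.Analysis" "Jordan_Normal_Form.Matrix"
begin

text \<open>The parameter set U, indices shifted to 0..n-1: 1 > theta 0 > ... > theta (n-1) > 0.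
  Points are extensional functions on the index set, as in the product measure space.\<close>
definition theta_domain :: "nat \<Rightarrow> (nat \<Rightarrow> real) set" where
  "theta_domain n = {\<theta> \<in> PiE {..<n} (\<lambda>_. {0<..<1}).
      \<forall>i j. i < j \<and> j < n \<longrightarrow> \<theta> i > \<theta> j}"

definition Theta_mat :: "real \<Rightarrow> nat \<Rightarrow> (nat \<Rightarrow> real) \<Rightarrow> real mat" where
  "Theta_mat h n \<theta> = mat n n (\<lambda>(i,j).
     if i = j then (1 / (4*h)) * cot (pi * \<theta> i)
     else (1 / (4*h)) * (cot (pi * ((\<theta> i + \<theta> j) / 2)) - cot (pi * ((\<theta> i - \<theta> j) / 2))))"

end

theory Submission
  imports Defs "HOL-Complex_Analysis.Complex_Analysis" "Jordan_Normal_Form.Determinant"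
begin

lemma Theta_carrier: "Theta_mat h n \<theta> \<in> carrier_mat n n"
  unfolding Theta_mat_def by auto

lemma det_ne0_invertible:
  fixes A :: "real mat"
  assumes A: "A \<in> carrier_mat n n" and d: "det A \<noteq> 0"
  shows "invertible_mat A"
proof -
  from det_non_zero_imp_unit[OF A d, unfolded Units_def, of "()"]
  obtain B where B: "B \<in> carrier_mat n n" and BA: "B * A = 1\<^sub>m n" and AB: "A * B = 1\<^sub>m n"
    by (auto simp: ring_mat_def)
  then show ?thesis using A unfolding invertible_mat_def inverts_mat_def square_mat.simps by auto
qed

lemma invertible_det_ne0:
  fixes A :: "real mat"
  assumes A: "A \<in> carrier_mat n n" and inv: "invertible_mat A"
  shows "det A \<noteq> 0"
proof -
  from inv obtain B where AB: "A * B = 1\<^sub>m (dim_row A)" and BA: "B * A = 1\<^sub>m (dim_row B)"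
    unfolding invertible_mat_def inverts_mat_def by auto
  have "dim_col B = n" using arg_cong[OF AB, of dim_col] A by auto
  moreover have "dim_row B = n" using arg_cong[OF BA, of dim_col] A by auto
  ultimately have B: "B \<in> carrier_mat n n" by auto
  have "det A * det B = 1" using det_mult[OF A B] AB A by (simp add: det_one)
  then show ?thesis by auto
qed

definition bnd :: "nat \<Rightarrow> (nat \<Rightarrow> real) \<Rightarrow> real" where
  "bnd n x = (if n = 0 then 1 else x (n-1))"

lemma dom_props:
  assumes x: "x \<in> theta_domain n" and i: "i < n"
  shows "0 < x i" "x i < 1" "bnd n x \<le> x i"
proof -
  show "0 < x i" "x i < 1" using x i unfolding theta_domain_def PiE_iff by auto
  have "x (n-1) \<le> x i"
  proof (cases "i = n - 1")
    case False then have "i < n - 1" using i by auto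
    then show ?thesis using x i unfolding theta_domain_def by (auto intro: less_imp_le)
  qed auto
  then show "bnd n x \<le> x i" using i unfolding bnd_def by auto
qed

lemma bnd_pos:
  assumes x: "x \<in> theta_domain n"
  shows "0 < bnd n x" "bnd n x \<le> 1"
  using dom_props[OF x, of "n-1"] unfolding bnd_def by auto

lemma dom_upd:
  assumes e: "x \<in> extensional {..<n}" and xy: "x(n:=y) \<in> theta_domain (Suc n)"
  shows "x \<in> theta_domain n" "0 < y" "y < bnd n x"
proof -
  have A: "\<And>i. i < Suc n \<Longrightarrow> 0 < (x(n:=y)) i \<and> (x(n:=y)) i < 1"
    using xy unfolding theta_domain_def PiE_iff by auto
  have B: "\<And>i j. i < j \<Longrightarrow> j < Suc n \<Longrightarrow> (x(n:=y)) j < (x(n:=y)) i"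
    using xy unfolding theta_domain_def by auto
  show "x \<in> theta_domain n" unfolding theta_domain_def PiE_iff
  proof (intro CollectI conjI ballI allI impI)
    fix i assume "i \<in> {..<n}" then show "x i \<in> {0<..<1}" using A[of i] by auto
  next
    show "x \<in> extensional {..<n}" by fact
  next
    fix i j assume "i < j \<and> j < n" then show "x j < x i" using B[of i j] by auto
  qed
  show "0 < y" using A[of n] by auto
  show "y < bnd n x"
  proof (cases "n = 0")
    case True then show ?thesis using A[of n] unfolding bnd_def by auto
  next
    case False then show ?thesis using B[of "n-1" n] unfolding bnd_def by (auto split: if_splits)
  qed
qed

abbreviation "MM n \<equiv> PiM {..<n} (\<lambda>_. lborel :: real measure)"

lemma comp_meas: "i < n \<Longrightarrow> (\<lambda>\<theta>. \<theta> i) \<in> borel_measurable (MM n)"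
  by measurable

lemma entry_meas:
  assumes i: "i < n" and j: "j < n"
  shows "(\<lambda>\<theta>. Theta_mat h n \<theta> $$ (i,j)) \<in> borel_measurable (MM n)"
proof -
  note [measurable] = comp_meas[OF i] comp_meas[OF j]
  show ?thesis
  proof (cases "i = j")
    case True
    then have eq: "(\<lambda>\<theta>. Theta_mat h n \<theta> $$ (i,j)) = (\<lambda>\<theta>. (1 / (4*h)) * (cos (pi * \<theta> i) / sin (pi * \<theta> i)))"
      using i j by (simp add: Theta_mat_def cot_def)
    show ?thesis unfolding eq by measurable
  next
    case False
    then have eq: "(\<lambda>\<theta>. Theta_mat h n \<theta> $$ (i,j)) = (\<lambda>\<theta>. (1 / (4*h)) *
       (cos (pi * ((\<theta> i + \<theta> j) / 2)) / sin (pi * ((\<theta> i + \<theta> j) / 2))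
        - cos (pi * ((\<theta> i - \<theta> j) / 2)) / sin (pi * ((\<theta> i - \<theta> j) / 2))))"
      using i j by (simp add: Theta_mat_def cot_def)
    show ?thesis unfolding eq by measurable
  qed
qed

lemma det_meas: "(\<lambda>\<theta>. det (Theta_mat h n \<theta>)) \<in> borel_measurable (MM n)"
  apply (simp only: det_def'[OF Theta_carrier])
  apply (intro borel_measurable_sum borel_measurable_times borel_measurable_const borel_measurable_prod)
  apply (rule entry_meas)
   apply (auto simp: permutes_in_image)
  done

definition Zset :: "real \<Rightarrow> nat \<Rightarrow> (nat \<Rightarrow> real) set" where
  "Zset h n = {\<theta> \<in> theta_domain n. det (Theta_mat h n \<theta>) = 0}"

lemma Zset_meas: "Zset h n \<in> sets (MM n)"
proof -
  note [measurable] = det_meas[of h n]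
  have [measurable]: "\<And>i. i < n \<Longrightarrow> (\<lambda>\<theta>. \<theta> i) \<in> borel_measurable (MM n)" by (rule comp_meas)
  have eq: "Zset h n = {\<theta> \<in> space (MM n). (\<forall>i<n. 0 < \<theta> i \<and> \<theta> i < 1) \<and>
      (\<forall>i<n. \<forall>j<n. i < j \<longrightarrow> \<theta> j < \<theta> i) \<and> det (Theta_mat h n \<theta>) = 0}"
    unfolding Zset_def theta_domain_def space_PiM PiE_iff space_lborel by auto
  show ?thesis unfolding eq by measurable
qed

lemma sin_nz:
  fixes w :: complex
  assumes "(0 < Re w \<and> Re w < 2) \<or> (-2 < Re w \<and> Re w < 0)"
  shows "sin (of_real pi * (w/2)) \<noteq> 0"
proof
  assume "sin (of_real pi * (w/2)) = 0"
  then obtain k :: int where k: "of_real pi * (w/2) = of_real (k * pi)"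
    unfolding sin_eq_0 by blast
  have "Re (of_real pi * (w/2)) = pi * Re w / 2" by simp
  also have "\<dots> = Re (of_real (k*pi))" using k by simp
  finally have "pi * Re w / 2 = k * pi" by simp
  then have "Re w = 2 * k" using pi_gt_zero by (simp add: field_simps)
  then have "(0 < k \<and> k < 1) \<or> (-1 < k \<and> k < 0)" using assms by auto
  then show False by linarith
qed

lemma cot_holo:
  fixes g :: "complex \<Rightarrow> complex"
  assumes g: "g holomorphic_on S"
    and s: "\<And>z. z \<in> S \<Longrightarrow> sin (of_real pi * (g z/2)) \<noteq> 0"
  shows "(\<lambda>z. cot (of_real pi * (g z / 2))) holomorphic_on S"
proof -
  have h: "(\<lambda>z. of_real pi * (g z / 2)) holomorphic_on S"
    by (intro holomorphic_on_mult holomorphic_on_const holomorphic_on_divide g) auto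
  have "(\<lambda>z. cos (of_real pi * (g z / 2)) / sin (of_real pi * (g z / 2))) holomorphic_on S"
    by (rule holomorphic_on_divide[OF holomorphic_on_compose[OF h holomorphic_on_cos, unfolded o_def]
          holomorphic_on_compose[OF h holomorphic_on_sin, unfolded o_def] s])
  then show ?thesis unfolding cot_def .
qed

lemma fsigma_ball: "fsigma (ball (a::complex) r)"
proof -
  have "ball a r = (\<Union>k. cball a (r - 1 / real (Suc k)))"
  proof (intro equalityI subsetI)
    fix z assume "z \<in> ball a r"
    then have "0 < r - dist a z" by auto
    then obtain k where "1 / real (Suc k) < r - dist a z"
      using reals_Archimedean by (metis inverse_eq_divide)
    then show "z \<in> (\<Union>k. cball a (r - 1 / real (Suc k)))" by (auto intro!: exI[of _ k])
  next
    fix z assume "z \<in> (\<Union>k. cball a (r - 1 / real (Suc k)))"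
    then obtain k where "dist a z \<le> r - 1 / real (Suc k)" by auto
    moreover have "0 < 1 / real (Suc k)" by auto
    ultimately have "dist a z < r" by linarith
    then show "z \<in> ball a r" by auto
  qed
  then show ?thesis by (metis closed_cball fsigma.intros)
qed

definition eC :: "real \<Rightarrow> nat \<Rightarrow> (nat \<Rightarrow> real) \<Rightarrow> complex \<Rightarrow> nat \<Rightarrow> nat \<Rightarrow> complex" where
  "eC h n x z i j = (if i < n \<and> j < n then of_real (Theta_mat h n x $$ (i,j))
     else if i = n \<and> j = n then of_real (1/(4*h)) * cos (of_real pi * z)
     else if i = n then of_real (1/(4*h)) * (sin (of_real pi * z) *
        (cot (of_real pi * ((z + of_real (x j))/2)) - cot (of_real pi * ((z - of_real (x j))/2))))
     else of_real (1/(4*h)) *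
        (cot (of_real pi * ((of_real (x i) + z)/2)) - cot (of_real pi * ((of_real (x i) - z)/2))))"

definition MC :: "real \<Rightarrow> nat \<Rightarrow> (nat \<Rightarrow> real) \<Rightarrow> complex \<Rightarrow> complex mat" where
  "MC h n x z = mat (Suc n) (Suc n) (\<lambda>(i,j). eC h n x z i j)"

lemma MC_carrier: "MC h n x z \<in> carrier_mat (Suc n) (Suc n)"
  unfolding MC_def by auto

lemma eC_holo:
  assumes x: "x \<in> theta_domain n" and i: "i < Suc n" and j: "j < Suc n"
  shows "(\<lambda>z. eC h n x z i j) holomorphic_on ball 0 (bnd n x)"
proof -
  have re: "\<bar>Re z\<bar> < bnd n x" if "z \<in> ball 0 (bnd n x)" for z
    using that abs_Re_le_cmod[of z] by auto
  have b1: "bnd n x \<le> 1" using bnd_pos[OF x] by auto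
  have cA: "(\<lambda>z. cot (of_real pi * ((z + of_real (x k))/2))) holomorphic_on ball 0 (bnd n x)"
    and cB: "(\<lambda>z. cot (of_real pi * ((z - of_real (x k))/2))) holomorphic_on ball 0 (bnd n x)"
    and cC: "(\<lambda>z. cot (of_real pi * ((of_real (x k) + z)/2))) holomorphic_on ball 0 (bnd n x)"
    and cD: "(\<lambda>z. cot (of_real pi * ((of_real (x k) - z)/2))) holomorphic_on ball 0 (bnd n x)"
    if k: "k < n" for k
  proof -
    have xk: "0 < x k" "x k < 1" "bnd n x \<le> x k" using dom_props[OF x k] by auto
    show "(\<lambda>z. cot (of_real pi * ((z + of_real (x k))/2))) holomorphic_on ball 0 (bnd n x)"
    proof (rule cot_holo)
      fix z :: complex assume "z \<in> ball 0 (bnd n x)"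
      from re[OF this] xk show "sin (of_real pi * ((z + of_real (x k))/2)) \<noteq> 0"
        by (intro sin_nz) auto
    qed (intro holomorphic_on_add holomorphic_on_ident holomorphic_on_const)
    show "(\<lambda>z. cot (of_real pi * ((z - of_real (x k))/2))) holomorphic_on ball 0 (bnd n x)"
    proof (rule cot_holo)
      fix z :: complex assume "z \<in> ball 0 (bnd n x)"
      from re[OF this] xk show "sin (of_real pi * ((z - of_real (x k))/2)) \<noteq> 0"
        by (intro sin_nz) auto
    qed (intro holomorphic_on_diff holomorphic_on_ident holomorphic_on_const)
    show "(\<lambda>z. cot (of_real pi * ((of_real (x k) + z)/2))) holomorphic_on ball 0 (bnd n x)"
    proof (rule cot_holo)
      fix z :: complex assume "z \<in> ball 0 (bnd n x)"
      from re[OF this] xk show "sin (of_real pi * ((of_real (x k) + z)/2)) \<noteq> 0"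
        by (intro sin_nz) auto
    qed (intro holomorphic_on_add holomorphic_on_ident holomorphic_on_const)
    show "(\<lambda>z. cot (of_real pi * ((of_real (x k) - z)/2))) holomorphic_on ball 0 (bnd n x)"
    proof (rule cot_holo)
      fix z :: complex assume "z \<in> ball 0 (bnd n x)"
      from re[OF this] xk show "sin (of_real pi * ((of_real (x k) - z)/2)) \<noteq> 0"
        by (intro sin_nz) auto
    qed (intro holomorphic_on_diff holomorphic_on_ident holomorphic_on_const)
  qed
  have sn: "(\<lambda>z. sin (of_real pi * z)) holomorphic_on ball 0 (bnd n x)"
    by (rule holomorphic_on_compose[OF _ holomorphic_on_sin, unfolded o_def])
       (intro holomorphic_on_mult holomorphic_on_ident holomorphic_on_const)
  have cs: "(\<lambda>z. cos (of_real pi * z)) holomorphic_on ball 0 (bnd n x)"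
    by (rule holomorphic_on_compose[OF _ holomorphic_on_cos, unfolded o_def])
       (intro holomorphic_on_mult holomorphic_on_ident holomorphic_on_const)
  consider "i < n \<and> j < n" | "i = n \<and> j = n" | "i = n \<and> j < n" | "i < n \<and> j = n"
    using i j by linarith
  then show ?thesis
  proof cases
    case 1 then show ?thesis unfolding eC_def by simp
  next
    case 2
    then have "(\<lambda>z. eC h n x z i j) = (\<lambda>z. of_real (1/(4*h)) * cos (of_real pi * z))"
      by (auto simp: eC_def)
    then show ?thesis by (simp only:) (intro holomorphic_on_mult holomorphic_on_const cs)
  next
    case 3
    then have "(\<lambda>z. eC h n x z i j) = (\<lambda>z. of_real (1/(4*h)) * (sin (of_real pi * z) *
        (cot (of_real pi * ((z + of_real (x j))/2)) - cot (of_real pi * ((z - of_real (x j))/2)))))"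
      by (auto simp: eC_def)
    then show ?thesis using 3 by (simp only:) (intro holomorphic_on_mult holomorphic_on_const holomorphic_on_diff sn cA cB; simp)
  next
    case 4
    then have "(\<lambda>z. eC h n x z i j) = (\<lambda>z. of_real (1/(4*h)) *
        (cot (of_real pi * ((of_real (x i) + z)/2)) - cot (of_real pi * ((of_real (x i) - z)/2))))"
      by (auto simp: eC_def)
    then show ?thesis using 4 by (simp only:) (intro holomorphic_on_mult holomorphic_on_const holomorphic_on_diff cC cD; simp)
  qed
qed

lemma G_holo:
  assumes x: "x \<in> theta_domain n"
  shows "(\<lambda>z. det (MC h n x z)) holomorphic_on ball 0 (bnd n x)"
proof -
  have eq: "det (MC h n x z) = (\<Sum>p\<in>{p. p permutes {0..<Suc n}}. signof p *
      (\<Prod>i = 0..<Suc n. eC h n x z i (p i)))" for z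
    unfolding det_def'[OF MC_carrier]
    by (intro sum.cong refl arg_cong2[where f="(*)"] prod.cong)
       (auto simp: MC_def permutes_in_image)
  show ?thesis unfolding eq
    by (intro holomorphic_on_sum holomorphic_on_mult holomorphic_on_const holomorphic_on_prod eC_holo[OF x])
       (auto simp: permutes_in_image)
qed

lemma G0:
  assumes d: "det (Theta_mat h n x) \<noteq> 0" and h: "h > 0"
  shows "det (MC h n x 0) \<noteq> 0"
proof -
  let ?A = "MC h n x 0"
  have "det ?A = (\<Sum>j<Suc n. ?A $$ (n,j) * cofactor ?A n j)"
    by (rule laplace_expansion_row[OF MC_carrier]) simp
  also have "\<dots> = ?A $$ (n,n) * cofactor ?A n n"
    by (simp add: MC_def eC_def)
  also have "?A $$ (n,n) = of_real (1/(4*h))"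
    by (simp add: MC_def eC_def)
  also have "cofactor ?A n n = det (mat_delete ?A n n)"
    unfolding cofactor_def by simp
  also have "mat_delete ?A n n = map_mat of_real (Theta_mat h n x)"
    by (rule eq_matI) (auto simp: mat_delete_def MC_def eC_def Theta_mat_def)
  also have "det (map_mat of_real (Theta_mat h n x)) = of_real (det (Theta_mat h n x))"
    by (rule of_real_hom.hom_det)
  finally show ?thesis using d h by simp
qed

lemma cotP: "cot (of_real pi * ((of_real a + of_real b)/2)) = (of_real (cot (pi*((a+b)/2))) :: complex)"
proof -
  have "of_real pi * ((of_real a + of_real b)/2) = (of_real (pi*((a+b)/2)) :: complex)" by simp
  then show ?thesis by (simp add: cot_of_real)
qed

lemma cotM: "cot (of_real pi * ((of_real a - of_real b)/2)) = (of_real (cot (pi*((a-b)/2))) :: complex)"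
proof -
  have "of_real pi * ((of_real a - of_real b)/2) = (of_real (pi*((a-b)/2)) :: complex)" by simp
  then show ?thesis by (simp add: cot_of_real)
qed

lemma cotP2: "cot (of_real pi * (of_real a + of_real b) / 2) = (of_real (cot (pi*(a+b)/2)) :: complex)"
proof -
  have "of_real pi * (of_real a + of_real b) / 2 = (of_real (pi*(a+b)/2) :: complex)" by simp
  then show ?thesis by (simp add: cot_of_real)
qed

lemma cotM2: "cot (of_real pi * (of_real a - of_real b) / 2) = (of_real (cot (pi*(a-b)/2)) :: complex)"
proof -
  have "of_real pi * (of_real a - of_real b) / 2 = (of_real (pi*(a-b)/2) :: complex)" by simp
  then show ?thesis by (simp add: cot_of_real)
qed

lemma sinR: "sin (of_real pi * of_real y) = (of_real (sin (pi*y)) :: complex)"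
  by (simp flip: of_real_mult add: sin_of_real)

lemma cosR: "cos (of_real pi * of_real y) = (of_real (cos (pi*y)) :: complex)"
  by (simp flip: of_real_mult add: cos_of_real)

lemma G_real:
  assumes x: "x \<in> theta_domain n" and y: "0 < y" "y < bnd n x"
  shows "det (MC h n x (of_real y)) = of_real (sin (pi*y)) * of_real (det (Theta_mat h (Suc n) (x(n:=y))))"
proof -
  let ?T = "Theta_mat h (Suc n) (x(n:=y))"
  have y1: "y < 1" using y bnd_pos[OF x] by auto
  have sy: "sin (pi*y) \<noteq> 0" using sin_gt_zero[of "pi*y"] y y1 by auto
  have "MC h n x (of_real y) = multrow n (complex_of_real (sin (pi*y))) (map_mat of_real ?T)"
  proof (rule eq_matI)
    fix i j assume i: "i < dim_row (multrow n (complex_of_real (sin (pi*y))) (map_mat of_real ?T))"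
      and j: "j < dim_col (multrow n (complex_of_real (sin (pi*y))) (map_mat of_real ?T))"
    then have i: "i < Suc n" and j: "j < Suc n" by (auto simp: Theta_mat_def)
    consider "i < n \<and> j < n" | "i = n \<and> j = n" | "i = n \<and> j < n" | "i < n \<and> j = n"
      using i j by linarith
    then show "MC h n x (of_real y) $$ (i, j) = multrow n (complex_of_real (sin (pi*y))) (map_mat of_real ?T) $$ (i, j)"
    proof cases
      case 1 then show ?thesis using i j by (simp add: MC_def eC_def Theta_mat_def)
    next
      case 2
      then have "MC h n x (of_real y) $$ (i, j) = of_real (1/(4*h) * cos (pi*y))"
        by (simp add: MC_def eC_def cosR)
      moreover have "multrow n (complex_of_real (sin (pi*y))) (map_mat of_real ?T) $$ (i, j)
          = of_real (sin (pi*y) * (1/(4*h) * cot (pi*y)))"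
        using 2 by (simp add: Theta_mat_def)
      moreover have "1/(4*h) * cos (pi*y) = sin (pi*y) * (1/(4*h) * cot (pi*y))"
        using sy by (simp add: cot_def)
      ultimately show ?thesis by (simp only:)
    next
      case 3
      then have "MC h n x (of_real y) $$ (i, j) = of_real (1/(4*h) * (sin (pi*y) *
         (cot (pi*((y + x j)/2)) - cot (pi*((y - x j)/2)))))"
        by (simp add: MC_def eC_def sinR cotP cotM cotP2 cotM2)
      moreover have "multrow n (complex_of_real (sin (pi*y))) (map_mat of_real ?T) $$ (i, j)
          = of_real (sin (pi*y) * (1/(4*h) * (cot (pi*((y + x j)/2)) - cot (pi*((y - x j)/2)))))"
        using 3 by (simp add: Theta_mat_def)
      moreover have "1/(4*h) * (sin (pi*y) * (cot (pi*((y + x j)/2)) - cot (pi*((y - x j)/2))))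
         = sin (pi*y) * (1/(4*h) * (cot (pi*((y + x j)/2)) - cot (pi*((y - x j)/2))))"
        by (rule mult.left_commute)
      ultimately show ?thesis by (simp only:)
    next
      case 4
      then have "MC h n x (of_real y) $$ (i, j) = of_real (1/(4*h) *
         (cot (pi*((x i + y)/2)) - cot (pi*((x i - y)/2))))"
        by (simp add: MC_def eC_def cotP cotM cotP2 cotM2)
      moreover have "multrow n (complex_of_real (sin (pi*y))) (map_mat of_real ?T) $$ (i, j)
          = of_real (1/(4*h) * (cot (pi*((x i + y)/2)) - cot (pi*((x i - y)/2))))"
        using 4 by (simp add: Theta_mat_def)
      ultimately show ?thesis by simp
    qed
  qed (auto simp: MC_def Theta_mat_def)
  then show ?thesis
    using det_multrow[of n "Suc n" "map_mat of_real ?T" "of_real (sin (pi*y))"]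
    by (simp add: Theta_carrier)
qed

lemma count_zeros:
  assumes h: "h > 0" and x: "x \<in> theta_domain n" and d: "det (Theta_mat h n x) \<noteq> 0"
  shows "countable {y. 0 < y \<and> y < bnd n x \<and> det (Theta_mat h (Suc n) (x(n:=y))) = 0}"
proof -
  let ?G = "\<lambda>z. det (MC h n x z)"
  let ?S = "ball (0::complex) (bnd n x)"
  have cz: "countable {z \<in> ?S. ?G z = 0}"
  proof (cases "?G constant_on ?S")
    case True
    then obtain c where c: "\<forall>z\<in>?S. ?G z = c" unfolding constant_on_def by blast
    have "0 \<in> ?S" using bnd_pos[OF x] by simp
    then have "\<forall>z\<in>?S. ?G z \<noteq> 0" using c G0[OF d h] by metis
    then have "{z\<in>?S. ?G z = 0} = {}" by auto
    then show ?thesis by (metis countable_empty)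
  next
    case False
    show ?thesis
      by (rule holomorphic_countable_zeros[OF G_holo[OF x] open_ball
            convex_connected[OF convex_ball] fsigma_ball False])
  qed
  let ?Y = "{y. 0 < y \<and> y < bnd n x \<and> det (Theta_mat h (Suc n) (x(n:=y))) = 0}"
  have "complex_of_real ` ?Y \<subseteq> {z \<in> ?S. ?G z = 0}"
  proof
    fix z assume "z \<in> complex_of_real ` ?Y"
    then obtain y where y: "y \<in> ?Y" and z: "z = of_real y" by auto
    have "norm z < bnd n x" using y z by simp
    moreover have "?G z = 0" using G_real[OF x, of y h] y z by simp
    ultimately show "z \<in> {z \<in> ?S. ?G z = 0}" by simp
  qed
  then have "countable (complex_of_real ` ?Y)" by (rule countable_subset[OF _ cz])
  then show ?thesis
    by (rule countable_image_inj_on) (auto intro: inj_onI)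
qed

lemma Z_null:
  assumes h: "h > 0"
  shows "Zset h n \<in> null_sets (MM n)"
proof (induction n)
  case 0
  have "\<And>\<theta>. Theta_mat h 0 \<theta> = 1\<^sub>m 0" by (rule eq_matI) (auto simp: Theta_mat_def)
  then have "Zset h 0 = {}" unfolding Zset_def by (simp add: det_one)
  then show ?case by simp
next
  case (Suc n)
  interpret P: product_sigma_finite "\<lambda>_::nat. lborel::real measure"
    by (simp add: product_sigma_finite_def sigma_finite_lborel)
  let ?Z = "Zset h (Suc n)"
  have meas: "?Z \<in> sets (MM (Suc n))" by (rule Zset_meas)
  have ins: "{..<Suc n} = insert n {..<n}" by auto
  have inner: "(\<integral>\<^sup>+ y. indicator ?Z (x(n:=y)) \<partial>lborel) = 0"
    if xs: "x \<in> space (MM n)" and xz: "x \<notin> Zset h n" for x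
  proof -
    have e: "x \<in> extensional {..<n}" using xs by (simp add: space_PiM PiE_iff)
    show ?thesis
    proof (cases "x \<in> theta_domain n")
      case False
      have "indicator ?Z (x(n:=y)) = (0::ennreal)" for y
        using dom_upd[OF e, of y] False unfolding Zset_def by (auto simp: indicator_def)
      then show ?thesis by simp
    next
      case True
      then have d: "det (Theta_mat h n x) \<noteq> 0" using xz unfolding Zset_def by auto
      let ?C = "{y. 0 < y \<and> y < bnd n x \<and> det (Theta_mat h (Suc n) (x(n:=y))) = 0}"
      have "?C \<in> null_sets lborel"
        by (rule countable_imp_null_set_lborel[OF count_zeros[OF h True d]])
      then have "AE y in lborel. y \<notin> ?C" by (rule AE_not_in)
      then have "AE y in lborel. indicator ?Z (x(n:=y)) = (0::ennreal)"
      proof (rule AE_mp, intro AE_I2 impI)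
        fix y assume "y \<notin> ?C"
        then show "indicator ?Z (x(n:=y)) = (0::ennreal)"
          using dom_upd[OF e, of y] unfolding Zset_def by (auto simp: indicator_def)
      qed
      note nn_integral_cong_AE[OF this]
      then show ?thesis by simp
    qed
  qed
  have "emeasure (MM (Suc n)) ?Z = (\<integral>\<^sup>+ \<theta>. indicator ?Z \<theta> \<partial>MM (Suc n))"
    by (simp add: nn_integral_indicator meas)
  also have "\<dots> = (\<integral>\<^sup>+ x. (\<integral>\<^sup>+ y. indicator ?Z (x(n:=y)) \<partial>lborel) \<partial>MM n)"
    unfolding ins
    by (rule P.product_nn_integral_insert) (use meas ins in auto)
  also have "\<dots> = (\<integral>\<^sup>+ x. 0 \<partial>MM n)"
  proof (rule nn_integral_cong_AE)
    have "AE x in MM n. x \<notin> Zset h n" by (rule AE_not_in[OF Suc.IH])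
    then show "AE x in MM n. (\<integral>\<^sup>+ y. indicator ?Z (x(n:=y)) \<partial>lborel) = 0"
      using AE_space by eventually_elim (use inner in auto)
  qed
  finally show ?case using meas by (simp add: null_sets_def)
qed

theorem theorem5p3:
  fixes h :: real and n :: nat
  assumes "h > 0" and "n \<ge> 1"
  shows "{\<theta> \<in> theta_domain n. \<not> invertible_mat (Theta_mat h n \<theta>)}
           \<in> null_sets (PiM {..<n} (\<lambda>_. lborel))"
proof -
  have eq: "{\<theta> \<in> theta_domain n. \<not> invertible_mat (Theta_mat h n \<theta>)} = Zset h n"
    unfolding Zset_def using det_ne0_invertible invertible_det_ne0 Theta_carrier by blast
  show ?thesis unfolding eq using Z_null[OF assms(1)] .
qed

end
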